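(* Assume (H1) and (H2) of the standing setting. Let $w\in V$ and $f\in H$. Then for every $\lambda\ge C_{\theta_1,1/4}\|w\|_V^{\theta_1}$ there exists $u\in V$ such that $$\lambda(u,v-u)+a(u,v-u)+\langle B(w,u),v-u\rangle+\varphi(v)-\varphi(u)\ge (f,v-u)\qquad\forall v\in V. \tag{O}$$ In particular, $u\in D(\partial\varphi)$.
   Context: Standing setting. $V\subset H\subset V'$ is a Gelfand triple of real Hilbert spaces ($H$ identified with its dual), with continuous and dense embeddings, and the embedding $V\hookrightarrow H$ is compact. $(\cdot,\cdot)$ denotes the inner product of $H$ and $\langle\cdot,\cdot\rangle$ the duality pairing between $V'$ and $V$. $a:V\times V\to\mathbb R$ is a bounded bilinear form with $a(u,u)\ge\alpha\|u\|^2$ for some $\alpha>0$; the norm of $V$ is taken to be $\|u\|_V:=\sqrt{a(u,u)}$. $B:V\times V\to V'$ is a bilinear operator with $|\langle B(u,v),w\rangle|\le C_B\|u\|_V\|v\|_V\|w\|_V$ for all $u,v,w\in V$. $\varphi:V\to(-\infty,+\infty]$ is convex, proper and lower semicontinuous, $D(\varphi)=\{v:\varphi(v)<\infty\}$, and $\varphi(v)\ge-C_{\varphi1}(\|v\|_V+1)$ for all $v$ for some constant $C_{\varphi1}>0$; $\partial\varphi(u)=\{\xi\in V':\langle\xi,v-u\rangle\le\varphi(v)-\varphi(u)\ \forall v\in V\}$, $D(\partial\varphi)=\{u:\partial\varphi(u)\ne\emptyset\}$. (H1) There are $C>0$, $\beta_1\in(0,1]$ with $|\langle B(u,v),v\rangle|\le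 C\|u\|_V\|v\|_V\|v\|_H^{\beta_1}\|v\|_V^{1-\beta_1}$ for all $u,v\in V$. Set $\theta_1:=2/\beta_1$; by Young's inequality, for every $\epsilon>0$ there is a constant $C_{\theta_1,\epsilon}>0$ (fixed once and for all) with $|\langle B(u,v),v\rangle|\le C_{\theta_1,\epsilon}\|u\|_V^{\theta_1}\|v\|_H^2+\epsilon\|v\|_V^2$ for all $u,v\in V$. (H2) For each fixed $u\in V$: if $v_j\rightharpoonup v$ and $w_j\rightharpoonup w$ weakly in $V$, then $\langle B(u,v_j),w_j\rangle\to\langle B(u,v),w\rangle$. *)

theory Defs
  imports "HOL-Analysis.Analysis"
begin

definition convex_ereal_fun :: "('v::real_vector \<Rightarrow> ereal) \<Rightarrow> bool" where
  "convex_ereal_fun \<phi> \<longleftrightarrow>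
     (\<forall>x y t. 0 < t \<and> t < 1 \<longrightarrow>
        \<phi> ((1 - t) *\<^sub>R x + t *\<^sub>R y) \<le> ereal (1 - t) * \<phi> x + ereal t * \<phi> y)"

definition proper_fun :: "('v \<Rightarrow> ereal) \<Rightarrow> bool" where
  "proper_fun \<phi> \<longleftrightarrow> (\<forall>v. \<phi> v \<noteq> -\<infinity>) \<and> (\<exists>v. \<phi> v < \<infinity>)"

definition lsc_fun :: "('v::topological_space \<Rightarrow> ereal) \<Rightarrow> bool" where
  "lsc_fun \<phi> \<longleftrightarrow> (\<forall>c. closed {v. \<phi> v \<le> c})"

text \<open>Effective domain of the subdifferential: the subgradients are elements of V',
  i.e. continuous linear functionals on V; \<open>\<phi> u\<close> must be finite.\<close>
definition subdiff :: "('v::real_normed_vector \<Rightarrow> ereal) \<Rightarrow> 'v \<Rightarrow> ('v \<Rightarrow> real) set" where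
  "subdiff \<phi> u = {\<xi>. bounded_linear \<xi> \<and> \<phi> u < \<infinity> \<and>
                     (\<forall>v. ereal (\<xi> (v - u)) + \<phi> u \<le> \<phi> v)}"

definition dom_subdiff :: "('v::real_normed_vector \<Rightarrow> ereal) \<Rightarrow> 'v set" where
  "dom_subdiff \<phi> = {u. subdiff \<phi> u \<noteq> {}}"

definition weak_conv :: "(nat \<Rightarrow> 'v::real_inner) \<Rightarrow> 'v \<Rightarrow> bool" where
  "weak_conv x y \<longleftrightarrow> (\<forall>z. (\<lambda>j. inner z (x j)) \<longlonglongrightarrow> inner z y)"

end

theory Submission
  imports Defs
begin


lemma test1: "(gy::real) \<le> gn/2 + gk/2 \<Longrightarrow> Y = A/2 + B/2 - C/4 \<Longrightarrow> Y/2 + gy \<le> (A/2+gn)/2 + (B/2+gk)/2 - C/8"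
  apply (simp add: field_simps) done

lemma lsc_add:
  fixes g h :: "'v::real_normed_vector \<Rightarrow> real"
  assumes lsc: "\<And>c. closed {v\<in>D. g v \<le> c}" and hc: "continuous_on UNIV h"
  shows "closed {v\<in>D. g v + h v \<le> c}"
  unfolding closed_sequential_limits
proof (intro allI impI, elim conjE)
  fix x l assume xs: "\<forall>n. x n \<in> {v\<in>D. g v + h v \<le> c}" and lim: "x \<longlonglongrightarrow> l"
  have hl: "(\<lambda>n. h (x n)) \<longlonglongrightarrow> h l"
    using hc lim by (metis continuous_on_tendsto_compose UNIV_I eventually_sequentially)
  have key: "l \<in> D \<and> g l \<le> c - h l + e" if e: "e > 0" for e
  proof -
    obtain N where N: "\<And>n. n \<ge> N \<Longrightarrow> dist (h (x n)) (h l) < e"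
      using hl e unfolding LIMSEQ_def by blast
    have "\<forall>n. x (n + N) \<in> {v\<in>D. g v \<le> c - h l + e}"
    proof
      fix n
      have "dist (h (x (n+N))) (h l) < e" using N by simp
      then have "h (x (n+N)) > h l - e" by (simp add: dist_real_def abs_less_iff)
      moreover have "x (n+N) \<in> D" "g (x (n+N)) + h (x (n+N)) \<le> c" using xs by auto
      ultimately show "x (n + N) \<in> {v\<in>D. g v \<le> c - h l + e}" by auto
    qed
    moreover have "(\<lambda>n. x (n + N)) \<longlonglongrightarrow> l" using lim by (rule LIMSEQ_ignore_initial_segment)
    ultimately have "l \<in> {v\<in>D. g v \<le> c - h l + e}"
      using lsc[of "c - h l + e"] unfolding closed_sequential_limits by (metis (no_types, lifting))
    then show ?thesis by auto
  qed
  have "l \<in> D" using key[of 1] by simp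
  moreover have "g l \<le> c - h l" by (rule field_le_epsilon) (use key in auto)
  ultimately show "l \<in> {v\<in>D. g v + h v \<le> c}" by simp
qed

lemma midpoint_ineq:
  fixes x y :: "'v::real_inner"
  shows "(norm ((1/2) *\<^sub>R x + (1/2) *\<^sub>R y))\<^sup>2 = (norm x)\<^sup>2/2 + (norm y)\<^sup>2/2 - (norm (x - y))\<^sup>2/4"
  unfolding power2_norm_eq_inner by (simp add: inner_add_left inner_add_right inner_diff_left inner_diff_right inner_commute field_simps)

lemma norm_line:
  fixes z d :: "'v::real_inner"
  shows "(norm (z + t *\<^sub>R d))\<^sup>2 = (norm z)\<^sup>2 + 2 * t * inner z d + t\<^sup>2 * (norm d)\<^sup>2"
  unfolding power2_norm_eq_inner by (simp add: inner_add_left inner_add_right inner_commute algebra_simps power2_eq_square)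

lemma small_t:
  fixes Q N :: real
  assumes "N \<ge> 0" and h: "\<And>t. 0 < t \<Longrightarrow> t < 1 \<Longrightarrow> 0 \<le> Q + t * N"
  shows "0 \<le> Q"
proof (rule ccontr)
  assume "\<not> 0 \<le> Q"
  then have Q: "Q < 0" by simp
  define t where "t = min (1/2) (- Q / (N + 1))"
  have qp: "- Q / (N + 1) > 0" using Q assms(1) by (intro divide_pos_pos) auto
  have t0: "0 < t" "t < 1" using qp by (auto simp: t_def)
  have "t * N \<le> (- Q / (N + 1)) * N" using assms(1) by (intro mult_right_mono) (auto simp: t_def)
  also have "\<dots> < - Q" using Q assms(1) by (simp add: field_simps)
  finally show False using h[OF t0] by simp
qed

lemma min_lemma:
  fixes g :: "'v::{real_inner,complete_space} \<Rightarrow> real" and D :: "'v set"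
  assumes D: "convex D" "D \<noteq> {}"
    and conv: "\<And>x y t. x\<in>D \<Longrightarrow> y\<in>D \<Longrightarrow> 0<t \<Longrightarrow> t<1 \<Longrightarrow> g ((1-t) *\<^sub>R x + t *\<^sub>R y) \<le> (1-t)*g x + t*g y"
    and lsc: "\<And>c. closed {v\<in>D. g v \<le> c}"
    and low: "\<And>v. v\<in>D \<Longrightarrow> g v \<ge> -K*(norm v + 1)"
  shows "\<exists>z\<in>D. \<forall>v\<in>D. inner z (v - z) + g v - g z \<ge> 0"
proof -
  define F where "F v = (norm v)\<^sup>2/2 + g v" for v
  have Flow: "F v \<ge> - K\<^sup>2/2 - K" if "v \<in> D" for v
  proof -
    have "0 \<le> (norm v - K)\<^sup>2" by simp
    then show ?thesis using low[OF that] unfolding F_def by (simp add: power2_eq_square algebra_simps)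
  qed
  have bdd: "bdd_below (F ` D)" using Flow by (metis bdd_belowI2)
  define m where "m = Inf (F ` D)"
  have mle: "m \<le> F v" if "v \<in> D" for v unfolding m_def using bdd that by (simp add: cInf_lower)
  have "\<forall>n. \<exists>x\<in>D. F x < m + 1/(real n + 1)"
  proof
    fix n :: nat
    have "Inf (F ` D) < m + 1/(real n + 1)" unfolding m_def by (simp add: add_pos_pos)
    from cInf_lessD[OF _ this] D(2) show "\<exists>x\<in>D. F x < m + 1/(real n + 1)" by auto
  qed
  then obtain x where xD: "\<And>n. x n \<in> D" and xF: "\<And>n. F (x n) < m + 1/(real n + 1)"
    by metis
  have mid: "(norm (x n - x k))\<^sup>2 \<le> 4 * (1/(real n + 1) + 1/(real k + 1))" for n k
  proof -
    define y where "y = (1/2) *\<^sub>R x n + (1/2) *\<^sub>R x k"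
    have y: "y = (1 - 1/2) *\<^sub>R x n + (1/2) *\<^sub>R x k" unfolding y_def by simp
    have yD: "y \<in> D" using D(1) xD unfolding y convex_def by auto
    have gy: "g y \<le> g (x n)/2 + g (x k)/2" using conv[OF xD xD, of "1/2" n k] unfolding y by simp
    have "m \<le> F y" by (rule mle[OF yD])
    also have "\<dots> \<le> F (x n)/2 + F (x k)/2 - (norm (x n - x k))\<^sup>2/8"
      using gy midpoint_ineq[of "x n" "x k", folded y_def] unfolding F_def by (rule test1)
    finally show ?thesis using xF[of n] xF[of k] by simp
  qed
  have "Cauchy x"
  proof (rule metric_CauchyI)
    fix e :: real assume e: "e > 0"
    obtain N :: nat where N: "8 / e\<^sup>2 < real N" using reals_Archimedean2 by blast
    have "dist (x n) (x k) < e" if "n \<ge> N" "k \<ge> N" for n k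
    proof -
      have "1/(real n + 1) \<le> 1/(real N + 1)" "1/(real k + 1) \<le> 1/(real N + 1)"
        using that by (auto simp: frac_le)
      with mid[of n k] have "(norm (x n - x k))\<^sup>2 \<le> 8 / (real N + 1)" by simp
      also have "\<dots> < e\<^sup>2" using N e by (simp add: field_simps) (smt (verit) mult_nonneg_nonneg zero_le_power2)
      finally have "(norm (x n - x k))\<^sup>2 < e\<^sup>2" .
      then show ?thesis using e by (simp add: dist_norm power_less_imp_less_base)
    qed
    then show "\<exists>M. \<forall>m\<ge>M. \<forall>n\<ge>M. dist (x m) (x n) < e" by blast
  qed
  then obtain z where lim: "x \<longlonglongrightarrow> z" using Cauchy_convergent_iff convergent_def by blast
  have nlim: "(\<lambda>n. (norm (x n))\<^sup>2) \<longlonglongrightarrow> (norm z)\<^sup>2"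
    by (intro tendsto_intros lim)
  have ilim: "(\<lambda>n. 1/(real n + 1)) \<longlonglongrightarrow> 0" using LIMSEQ_inverse_real_of_nat by (simp add: inverse_eq_divide add.commute)
  have key: "z \<in> D \<and> g z \<le> m - (norm z)\<^sup>2/2 + e" if e: "e > 0" for e
  proof -
    have "(\<lambda>n. 1/(real n + 1) - (norm (x n))\<^sup>2/2) \<longlonglongrightarrow> 0 - (norm z)\<^sup>2/2"
      using lim by (intro tendsto_intros ilim nlim) auto
    then obtain N where N: "\<And>n. n \<ge> N \<Longrightarrow> dist (1/(real n + 1) - (norm (x n))\<^sup>2/2) (0 - (norm z)\<^sup>2/2) < e"
      using e unfolding LIMSEQ_def by blast
    have "\<forall>n. x (n + N) \<in> {v\<in>D. g v \<le> m - (norm z)\<^sup>2/2 + e}"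
    proof
      fix n
      have "dist (1/(real (n+N) + 1) - (norm (x (n+N)))\<^sup>2/2) (0 - (norm z)\<^sup>2/2) < e" using N[of "n+N"] by simp
      then have "1/(real (n+N) + 1) - (norm (x (n+N)))\<^sup>2/2 < - (norm z)\<^sup>2/2 + e"
        by (simp add: dist_real_def abs_less_iff)
      moreover have "g (x (n+N)) < m + 1/(real (n+N) + 1) - (norm (x (n+N)))\<^sup>2/2"
        using xF[of "n+N"] unfolding F_def by simp
      ultimately show "x (n + N) \<in> {v\<in>D. g v \<le> m - (norm z)\<^sup>2/2 + e}" using xD by auto
    qed
    moreover have "(\<lambda>n. x (n + N)) \<longlonglongrightarrow> z" using lim by (rule LIMSEQ_ignore_initial_segment)
    ultimately have "z \<in> {v\<in>D. g v \<le> m - (norm z)\<^sup>2/2 + e}"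
      using lsc[of "m - (norm z)\<^sup>2/2 + e"] unfolding closed_sequential_limits by (metis (no_types, lifting))
    then show ?thesis by auto
  qed
  have zD: "z \<in> D" using key[of 1] by simp
  have "g z \<le> m - (norm z)\<^sup>2/2" by (rule field_le_epsilon) (use key in auto)
  then have Fz: "F z \<le> F v" if "v \<in> D" for v using mle[OF that] unfolding F_def by simp
  show ?thesis
  proof (intro bexI[OF _ zD] ballI)
    fix v assume vD: "v \<in> D"
    define d where "d = v - z"
    have H: "0 \<le> (inner z d + g v - g z) + t * ((norm d)\<^sup>2/2)" if t: "0 < t" "t < 1" for t
    proof -
      have eq: "(1 - t) *\<^sub>R z + t *\<^sub>R v = z + t *\<^sub>R d" unfolding d_def by (simp add: algebra_simps)
      have inD: "z + t *\<^sub>R d \<in> D" using D(1) zD vD t unfolding eq[symmetric] convex_def by auto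
      have "F z \<le> F (z + t *\<^sub>R d)" by (rule Fz[OF inD])
      also have "\<dots> \<le> (norm z)\<^sup>2/2 + t * inner z d + t\<^sup>2 * (norm d)\<^sup>2/2 + ((1-t) * g z + t * g v)"
      proof -
        have A: "(norm (z + t *\<^sub>R d))\<^sup>2/2 = (norm z)\<^sup>2/2 + t * inner z d + t\<^sup>2 * (norm d)\<^sup>2/2"
          using norm_line[of z t d] by (simp add: add_divide_distrib)
        have B: "g (z + t *\<^sub>R d) \<le> (1-t) * g z + t * g v" using conv[OF zD vD t] unfolding eq .
        show ?thesis unfolding F_def using A B by linarith
      qed
      finally have h: "(norm z)\<^sup>2/2 + g z \<le> (norm z)\<^sup>2/2 + t * inner z d + t\<^sup>2 * (norm d)\<^sup>2/2 + ((1-t) * g z + t * g v)"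
        unfolding F_def .
      have h2: "0 \<le> t * inner z d + t\<^sup>2 * (norm d)\<^sup>2/2 + t * g v - t * g z"
        using h by (simp add: algebra_simps)
      have e2: "t * inner z d + t\<^sup>2 * (norm d)\<^sup>2/2 + t * g v - t * g z = t * ((inner z d + g v - g z) + t * ((norm d)\<^sup>2/2))"
        by (simp add: algebra_simps power2_eq_square)
      have "0 \<le> t * ((inner z d + g v - g z) + t * ((norm d)\<^sup>2/2))" using h2 e2 by simp
      then show ?thesis using mult_le_cancel_left_pos[OF t(1), of 0] by simp
    qed
    have "0 \<le> inner z d + g v - g z" by (rule small_t[OF _ H]) simp_all
    then show "inner z (v - z) + g v - g z \<ge> 0" unfolding d_def by simp
  qed
qed



lemma riesz:
  fixes l :: "'v::{real_inner,complete_space} \<Rightarrow> real"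
  assumes bl: "bounded_linear l"
  shows "\<exists>z. \<forall>y. inner z y = l y"
proof -
  interpret bounded_linear l by (rule bl)
  obtain K where K: "\<And>x. norm (l x) \<le> norm x * K" "K > 0" using pos_bounded by blast
  have "\<exists>z\<in>UNIV. \<forall>v\<in>UNIV. inner z (v - z) + (- l v) - (- l z) \<ge> 0"
  proof (rule min_lemma[where K = K])
    show "convex (UNIV::'v set)" by simp
    show "(UNIV::'v set) \<noteq> {}" by simp
    show "- l ((1 - t) *\<^sub>R x + t *\<^sub>R y) \<le> (1 - t) * - l x + t * - l y" for x y t
    proof -
      have "l ((1 - t) *\<^sub>R x + t *\<^sub>R y) = (1-t) * l x + t * l y" by (simp only: add scale real_scaleR_def)
      then show ?thesis by simp
    qed
    show "closed {v \<in> UNIV. - l v \<le> c}" for c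
    proof -
      have "continuous_on UNIV l" using bl by (simp add: linear_continuous_on)
      then have "closed {v. - l v \<le> c}" by (intro closed_Collect_le continuous_intros) auto
      then show ?thesis by simp
    qed
    show "- l v \<ge> - K * (norm v + 1)" for v
      using K(1)[of v] K(2) by (auto simp: algebra_simps abs_le_iff)
  qed
  then obtain z where z: "\<And>v. inner z (v - z) + (- l v) - (- l z) \<ge> 0" by blast
  have "inner z y = l y" for y
    using z[of "z + y"] z[of "z - y"] by (simp add: add diff inner_diff_right)
  then show ?thesis by blast
qed

lemma prox:
  fixes r :: "'v::{real_inner,complete_space} \<Rightarrow> real" and D :: "'v set"
  assumes D: "convex D" "D \<noteq> {}"
    and conv: "\<And>x y t. x\<in>D \<Longrightarrow> y\<in>D \<Longrightarrow> 0<t \<Longrightarrow> t<1 \<Longrightarrow> r ((1-t) *\<^sub>R x + t *\<^sub>R y) \<le> (1-t)*r x + t*r y"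
    and lsc: "\<And>c. closed {v\<in>D. r v \<le> c}"
    and low: "\<And>v. v\<in>D \<Longrightarrow> r v \<ge> -K*(norm v + 1)"
    and rho: "\<rho> > 0"
  shows "\<exists>z\<in>D. \<forall>v\<in>D. inner (z - p) (v - z) + \<rho> * (r v - r z) \<ge> 0"
proof -
  define g where "g v = \<rho> * r v + (- inner p v)" for v
  have "\<exists>z\<in>D. \<forall>v\<in>D. inner z (v - z) + g v - g z \<ge> 0"
  proof (rule min_lemma[where K = "\<rho> * \<bar>K\<bar> + norm p"])
    show "convex D" "D \<noteq> {}" by (fact D)+
    show "g ((1 - t) *\<^sub>R x + t *\<^sub>R y) \<le> (1 - t) * g x + t * g y" if "x \<in> D" "y \<in> D" "0 < t" "t < 1" for x y t
    proof -
      have "\<rho> * r ((1 - t) *\<^sub>R x + t *\<^sub>R y) \<le> \<rho> * ((1-t)*r x + t*r y)"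
        using conv[OF that] rho by simp
      then show ?thesis unfolding g_def by (simp add: inner_add_right algebra_simps)
    qed
    show "closed {v \<in> D. g v \<le> c}" for c
    proof -
      have "closed {v \<in> D. \<rho> * r v + (- inner p v) \<le> c}"
      proof (rule lsc_add)
        show "closed {v \<in> D. \<rho> * r v \<le> c}" for c
        proof -
          have "{v \<in> D. \<rho> * r v \<le> c} = {v \<in> D. r v \<le> c / \<rho>}" using rho by (auto simp: field_simps)
          then show ?thesis using lsc by simp
        qed
        show "continuous_on UNIV (\<lambda>v. - inner p v)" by (intro continuous_intros)
      qed
      then show ?thesis unfolding g_def .
    qed
    show "g v \<ge> - (\<rho> * \<bar>K\<bar> + norm p) * (norm v + 1)" if "v \<in> D" for v
    proof -
      have "\<rho> * r v \<ge> \<rho> * (-K*(norm v + 1))" using mult_left_mono[OF low[OF that], of \<rho>] rho by simp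
      moreover have "\<rho> * (-K*(norm v + 1)) \<ge> - (\<rho> * \<bar>K\<bar>) * (norm v + 1)"
        using rho by (simp add: mult_right_mono)
      moreover have "inner p v \<le> norm p * (norm v + 1)"
        using norm_cauchy_schwarz[of p v] norm_ge_zero[of p] unfolding distrib_left by linarith
      ultimately show ?thesis unfolding g_def by (simp add: algebra_simps)
    qed
  qed
  then obtain z where "z \<in> D" "\<And>v. v \<in> D \<Longrightarrow> inner z (v - z) + g v - g z \<ge> 0" by blast
  then show ?thesis unfolding g_def
    by (intro bexI[of _ z]) (auto simp: inner_diff_left inner_diff_right algebra_simps)
qed



lemma stampacchia:
  fixes r :: "'v::{real_inner,complete_space} \<Rightarrow> real" and D :: "'v set"
    and c :: "'v \<Rightarrow> 'v \<Rightarrow> real" and L :: "'v \<Rightarrow> real"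
  assumes D: "convex D" "D \<noteq> {}"
    and conv: "\<And>x y t. x\<in>D \<Longrightarrow> y\<in>D \<Longrightarrow> 0<t \<Longrightarrow> t<1 \<Longrightarrow> r ((1-t) *\<^sub>R x + t *\<^sub>R y) \<le> (1-t)*r x + t*r y"
    and lsc: "\<And>c. closed {v\<in>D. r v \<le> c}"
    and low: "\<And>v. v\<in>D \<Longrightarrow> r v \<ge> -K*(norm v + 1)"
    and cb: "bounded_bilinear c"
    and coer: "\<beta> > 0" "\<And>u. c u u \<ge> \<beta> * (norm u)\<^sup>2"
    and bl: "bounded_linear L"
  shows "\<exists>u\<in>D. \<forall>v\<in>D. c u (v - u) - L (v - u) + r v - r u \<ge> 0"
proof -
  interpret c: bounded_bilinear c by (rule cb)
  obtain M0 where M0: "\<And>x y. norm (c x y) \<le> norm x * norm y * M0" "M0 > 0"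
    using c.pos_bounded by blast
  define M where "M = M0 + \<beta>"
  have M: "M > 0" "M \<ge> \<beta>" "M \<ge> M0" using M0 coer by (auto simp: M_def)
  have "\<forall>u. \<exists>z. \<forall>y. inner z y = c u y"
    using riesz c.bounded_linear_right by blast
  then obtain A where A: "\<And>u y. inner (A u) y = c u y" by metis
  obtain gL where gL: "\<And>y. inner gL y = L y" using riesz[OF bl] by blast
  define \<rho> where "\<rho> = \<beta> / M\<^sup>2"
  have rho: "\<rho> > 0" using coer M by (simp add: \<rho>_def)
  define k where "k = sqrt (1 - \<beta>\<^sup>2 / M\<^sup>2)"
  have bM: "\<beta>\<^sup>2 / M\<^sup>2 \<le> 1" using M coer by (simp add: power_mono)
  have bM0: "\<beta>\<^sup>2 / M\<^sup>2 > 0" using M coer by simp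
  have k: "0 \<le> k" "k < 1" using bM bM0 by (auto simp: k_def)
  have "\<forall>p. \<exists>z\<in>D. \<forall>v\<in>D. inner (z - p) (v - z) + \<rho> * (r v - r z) \<ge> 0"
    using prox[OF D conv lsc low rho] by blast
  then obtain P where PD: "\<And>p. P p \<in> D"
    and Pv: "\<And>p v. v \<in> D \<Longrightarrow> inner (P p - p) (v - P p) + \<rho> * (r v - r (P p)) \<ge> 0"
    by metis
  have nonexp: "norm (P p1 - P p2) \<le> norm (p1 - p2)" for p1 p2
  proof -
    have h1: "inner (P p1 - p1) (P p2 - P p1) + \<rho> * (r (P p2) - r (P p1)) \<ge> 0" by (rule Pv[OF PD])
    have h2: "inner (P p2 - p2) (P p1 - P p2) + \<rho> * (r (P p1) - r (P p2)) \<ge> 0" by (rule Pv[OF PD])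
    have eq: "inner (P p1 - p1) (P p2 - P p1) + inner (P p2 - p2) (P p1 - P p2)
        = inner (p1 - p2) (P p1 - P p2) - (norm (P p1 - P p2))\<^sup>2"
      unfolding power2_norm_eq_inner by (simp add: inner_diff_left inner_diff_right inner_commute)
    have "(norm (P p1 - P p2))\<^sup>2 \<le> inner (p1 - p2) (P p1 - P p2)"
      using h1 h2 eq by (simp add: algebra_simps)
    also have "\<dots> \<le> norm (p1 - p2) * norm (P p1 - P p2)" by (rule norm_cauchy_schwarz)
    finally have "norm (P p1 - P p2) * norm (P p1 - P p2) \<le> norm (p1 - p2) * norm (P p1 - P p2)"
      by (simp add: power2_eq_square)
    then show ?thesis
      by (cases "norm (P p1 - P p2) = 0") (auto simp: mult_le_cancel_right)
  qed
  define T where "T u = P (u - \<rho> *\<^sub>R (A u - gL))" for u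
  have contr: "norm ((u1 - \<rho> *\<^sub>R (A u1 - gL)) - (u2 - \<rho> *\<^sub>R (A u2 - gL))) \<le> k * norm (u1 - u2)" for u1 u2
  proof -
    define e where "e = u1 - u2"
    define \<Delta> where "\<Delta> = A u1 - A u2"
    have Di: "inner \<Delta> y = c e y" for y
      unfolding \<Delta>_def e_def by (simp add: inner_diff_left A c.diff_left)
    have eq1: "(u1 - \<rho> *\<^sub>R (A u1 - gL)) - (u2 - \<rho> *\<^sub>R (A u2 - gL)) = e - \<rho> *\<^sub>R \<Delta>"
      unfolding e_def \<Delta>_def by (simp add: algebra_simps)
    have "(norm \<Delta>)\<^sup>2 = c e \<Delta>" using Di[of \<Delta>] by (simp add: power2_norm_eq_inner)
    also have "\<dots> \<le> norm e * norm \<Delta> * M0" using M0(1)[of e \<Delta>] by simp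
    finally have "norm \<Delta> * norm \<Delta> \<le> (M0 * norm e) * norm \<Delta>" by (simp add: power2_eq_square algebra_simps)
    then have nD: "norm \<Delta> \<le> M0 * norm e"
      using M0(2) by (cases "norm \<Delta> = 0") (auto simp: mult_le_cancel_right)
    have nD2: "(norm \<Delta>)\<^sup>2 \<le> M\<^sup>2 * (norm e)\<^sup>2"
    proof -
      have "norm \<Delta> \<le> M * norm e" using nD M mult_right_mono[of M0 M "norm e"] by simp
      then have "(norm \<Delta>)\<^sup>2 \<le> (M * norm e)\<^sup>2" by (rule power_mono) simp
      then show ?thesis by (simp add: power_mult_distrib)
    qed
    have "(norm (e - \<rho> *\<^sub>R \<Delta>))\<^sup>2 = (norm e)\<^sup>2 - 2 * \<rho> * inner \<Delta> e + \<rho>\<^sup>2 * (norm \<Delta>)\<^sup>2"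
      unfolding power2_norm_eq_inner
      by (simp add: inner_diff_left inner_diff_right inner_commute algebra_simps power2_eq_square)
    also have "\<dots> \<le> (norm e)\<^sup>2 - 2 * \<rho> * (\<beta> * (norm e)\<^sup>2) + \<rho>\<^sup>2 * (M\<^sup>2 * (norm e)\<^sup>2)"
    proof -
      have "inner \<Delta> e \<ge> \<beta> * (norm e)\<^sup>2" using Di[of e] coer(2)[of e] by simp
      then have a: "2 * \<rho> * inner \<Delta> e \<ge> 2 * \<rho> * (\<beta> * (norm e)\<^sup>2)" using rho by simp
      have b: "\<rho>\<^sup>2 * (norm \<Delta>)\<^sup>2 \<le> \<rho>\<^sup>2 * (M\<^sup>2 * (norm e)\<^sup>2)" using nD2 by (simp add: mult_left_mono)
      show ?thesis using a b by linarith
    qed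
    also have "\<dots> = (1 - \<beta>\<^sup>2 / M\<^sup>2) * (norm e)\<^sup>2"
      using M by (simp add: \<rho>_def field_simps power2_eq_square)
    also have "\<dots> = (k * norm e)\<^sup>2"
      using bM by (simp add: k_def power_mult_distrib)
    finally have "(norm (e - \<rho> *\<^sub>R \<Delta>))\<^sup>2 \<le> (k * norm e)\<^sup>2" .
    then have "norm (e - \<rho> *\<^sub>R \<Delta>) \<le> k * norm e"
      by (rule power2_le_imp_le) (use k in simp)
    then show ?thesis unfolding eq1 e_def .
  qed
  have "\<exists>!u. T u = u"
  proof (rule banach_fix_type[OF k])
    show "\<forall>x y. dist (T x) (T y) \<le> k * dist x y"
      unfolding T_def dist_norm using nonexp contr order_trans by blast
  qed
  then obtain u where u: "T u = u" by blast
  show ?thesis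
  proof (intro bexI ballI)
    show "u \<in> D" using PD[of "u - \<rho> *\<^sub>R (A u - gL)"] u unfolding T_def by simp
    fix v assume vD: "v \<in> D"
    have "inner (u - (u - \<rho> *\<^sub>R (A u - gL))) (v - u) + \<rho> * (r v - r u) \<ge> 0"
      using Pv[OF vD, of "u - \<rho> *\<^sub>R (A u - gL)"] u unfolding T_def by simp
    then have "\<rho> * (c u (v - u) - L (v - u) + r v - r u) \<ge> 0"
      by (simp add: inner_diff_left A gL algebra_simps linear_diff[OF bounded_linear.linear[OF bl]] c.diff_right)
    then show "c u (v - u) - L (v - u) + r v - r u \<ge> 0"
      using rho by (simp add: zero_le_mult_iff)
  qed
qed



theorem mainTheorem3:
  fixes emb :: "'v::{real_inner,complete_space} \<Rightarrow> 'h::{real_inner,complete_space}"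
    and a :: "'v \<Rightarrow> 'v \<Rightarrow> real"
    and b :: "'v \<Rightarrow> 'v \<Rightarrow> 'v \<Rightarrow> real"
    and \<phi> :: "'v \<Rightarrow> ereal"
    and normV :: "'v \<Rightarrow> real"
    and \<alpha> C_B C_\<phi>1 C \<beta>1 \<theta>1 :: real
    and C\<theta> :: "real \<Rightarrow> real"
    and w :: 'v and f :: 'h and lam :: real
  assumes emb_lin: "bounded_linear emb"
    and emb_inj: "inj emb"
    and emb_dense: "closure (range emb) = UNIV"
    and emb_compact: "\<And>S. bounded S \<Longrightarrow> compact (closure (emb ` S))"
    and a_bil: "bounded_bilinear a"
    and a_coercive: "\<alpha> > 0" "\<And>u. a u u \<ge> \<alpha> * (norm u)\<^sup>2"
    and normV_def: "\<And>u. normV u = sqrt (a u u)"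
    and b_lin1: "\<And>v w. linear (\<lambda>u. b u v w)"
    and b_lin2: "\<And>u w. linear (\<lambda>v. b u v w)"
    and b_lin3: "\<And>u v. linear (\<lambda>w. b u v w)"
    and b_bound: "\<And>u v w. \<bar>b u v w\<bar> \<le> C_B * normV u * normV v * normV w"
    and \<phi>_convex: "convex_ereal_fun \<phi>"
    and \<phi>_proper: "proper_fun \<phi>"
    and \<phi>_lsc: "lsc_fun \<phi>"
    and \<phi>_lower: "C_\<phi>1 > 0" "\<And>v. \<phi> v \<ge> ereal (- C_\<phi>1 * (normV v + 1))"
    and H1: "C > 0" "0 < \<beta>1" "\<beta>1 \<le> 1"
      "\<And>u v. \<bar>b u v v\<bar> \<le> C * normV u * normV v * norm (emb v) powr \<beta>1 * normV v powr (1 - \<beta>1)"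
    and \<theta>1_def: "\<theta>1 = 2 / \<beta>1"
    and Young: "\<And>\<epsilon>. \<epsilon> > 0 \<Longrightarrow> C\<theta> \<epsilon> > 0"
      "\<And>\<epsilon> u v. \<epsilon> > 0 \<Longrightarrow>
         \<bar>b u v v\<bar> \<le> C\<theta> \<epsilon> * normV u powr \<theta>1 * (norm (emb v))\<^sup>2 + \<epsilon> * (normV v)\<^sup>2"
    and H2: "\<And>u vs v ws w. weak_conv vs v \<Longrightarrow> weak_conv ws w \<Longrightarrow>
               (\<lambda>j. b u (vs j) (ws j)) \<longlonglongrightarrow> b u v w"
    and lam_ge: "lam \<ge> C\<theta> (1/4) * normV w powr \<theta>1"
  shows "\<exists>u. \<phi> u < \<infinity> \<and>
           (\<forall>v. ereal (lam * inner (emb u) (emb (v - u)) + a u (v - u) + b w u (v - u)) + \<phi> v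
                 \<ge> ereal (inner f (emb (v - u))) + \<phi> u)
           \<and> u \<in> dom_subdiff \<phi>"
proof -
  interpret emb: bounded_linear emb by (rule emb_lin)
  interpret a: bounded_bilinear a by (rule a_bil)
  obtain Ke where Ke: "\<And>x. norm (emb x) \<le> norm x * Ke" "Ke > 0" using emb.pos_bounded by blast
  obtain Ka where Ka: "\<And>x y. norm (a x y) \<le> norm x * norm y * Ka" "Ka > 0" using a.pos_bounded by blast
  have a_nonneg: "a u u \<ge> 0" for u
    using a_coercive(1) a_coercive(2)[of u] by (smt (verit) mult_nonneg_nonneg zero_le_power2)
  have nV0: "normV u \<ge> 0" for u using a_nonneg by (simp add: normV_def)
  have nV2: "(normV u)\<^sup>2 = a u u" for u using a_nonneg[of u] by (simp add: normV_def)
  define sK where "sK = sqrt Ka"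
  have sK: "sK \<ge> 0" using Ka by (simp add: sK_def)
  have nVb: "normV u \<le> sK * norm u" for u
  proof -
    have "a u u \<le> Ka * (norm u)\<^sup>2" using Ka(1)[of u u] by (simp add: power2_eq_square algebra_simps)
    then have "normV u \<le> sqrt (Ka * (norm u)\<^sup>2)" by (simp add: normV_def)
    also have "\<dots> = sK * norm u" by (simp add: sK_def real_sqrt_mult)
    finally show ?thesis .
  qed
  define D where "D = {v. \<phi> v < \<infinity>}"
  define r where "r v = real_of_ereal (\<phi> v)" for v
  have ninf: "\<phi> v \<noteq> -\<infinity>" for v using \<phi>_proper by (simp add: proper_fun_def)
  have fin: "\<phi> v = ereal (r v)" if "v \<in> D" for v
    using that ninf[of v] unfolding D_def r_def by (cases "\<phi> v") auto
  have notD: "\<phi> v = \<infinity>" if "v \<notin> D" for v using that unfolding D_def by simp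
  have Dne: "D \<noteq> {}" using \<phi>_proper by (auto simp: proper_fun_def D_def)
  have convD: "(1-t) *\<^sub>R x + t *\<^sub>R y \<in> D \<and> r ((1-t) *\<^sub>R x + t *\<^sub>R y) \<le> (1-t)*r x + t*r y"
    if "x\<in>D" "y\<in>D" "0<t" "t<1" for x y t
  proof -
    have "\<phi> ((1-t) *\<^sub>R x + t *\<^sub>R y) \<le> ereal (1 - t) * \<phi> x + ereal t * \<phi> y"
      using \<phi>_convex that unfolding convex_ereal_fun_def by blast
    also have "\<dots> = ereal ((1-t)*r x + t*r y)" using fin that by simp
    finally have h: "\<phi> ((1-t) *\<^sub>R x + t *\<^sub>R y) \<le> ereal ((1-t)*r x + t*r y)" .
    then have inD: "(1-t) *\<^sub>R x + t *\<^sub>R y \<in> D" unfolding D_def using order.strict_trans1 by fastforce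
    show ?thesis using inD h fin[OF inD] by simp
  qed
  have Dconv: "convex D"
    unfolding convex_def
  proof (intro ballI allI impI)
    fix x y and u v :: real assume xy: "x \<in> D" "y \<in> D" and uv: "0 \<le> u" "0 \<le> v" "u + v = 1"
    show "u *\<^sub>R x + v *\<^sub>R y \<in> D"
    proof (cases "v = 0 \<or> v = 1")
      case True then show ?thesis using xy uv by auto
    next
      case False
      then have "0 < v" "v < 1" using uv by auto
      then show ?thesis using convD[OF xy, of v] uv by (simp add: eq_diff_eq[symmetric])
    qed
  qed
  have lsc: "closed {v\<in>D. r v \<le> c}" for c
  proof -
    have "{v\<in>D. r v \<le> c} = {v. \<phi> v \<le> ereal c}"
    proof safe
      fix v assume "v \<in> D" "r v \<le> c" then show "\<phi> v \<le> ereal c" using fin by simp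
    next
      fix v assume h: "\<phi> v \<le> ereal c"
      then show vD: "v \<in> D" unfolding D_def using order.strict_trans1 by fastforce
      show "r v \<le> c" using h fin[OF vD] by simp
    qed
    then show ?thesis using \<phi>_lsc unfolding lsc_fun_def by simp
  qed
  have low: "r v \<ge> - (C_\<phi>1 * (sK + 1)) * (norm v + 1)" if "v \<in> D" for v
  proof -
    have "r v \<ge> - C_\<phi>1 * (normV v + 1)" using \<phi>_lower(2)[of v] fin[OF that] by simp
    moreover have "normV v + 1 \<le> (sK + 1) * (norm v + 1)"
      using nVb[of v] sK by (simp add: algebra_simps) (smt (verit) norm_ge_zero)
    ultimately show ?thesis using \<phi>_lower(1)
      by (smt (verit) mult_left_mono mult.assoc mult_minus_left)
  qed
  define c where "c u z = lam * inner (emb u) (emb z) + a u z + b w u z" for u z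
  have bw2: "linear (\<lambda>u. b w u z)" for z by (rule b_lin2)
  have bw3: "linear (\<lambda>z. b w u z)" for u by (rule b_lin3)
  have cb: "bounded_bilinear c"
  proof
    show "c (x + x') y = c x y + c x' y" for x x' y
      unfolding c_def using linear_add[OF bw2] by (simp add: emb.add inner_add_left a.add_left algebra_simps)
    show "c x (y + y') = c x y + c x y'" for x y y'
      unfolding c_def using linear_add[OF bw3] by (simp add: emb.add inner_add_right a.add_right algebra_simps)
    show "c (s *\<^sub>R x) y = s *\<^sub>R c x y" for s x y
      unfolding c_def using linear_scale[OF bw2] by (simp add: emb.scale a.scaleR_left algebra_simps)
    show "c x (s *\<^sub>R y) = s *\<^sub>R c x y" for s x y
      unfolding c_def using linear_scale[OF bw3] by (simp add: emb.scale a.scaleR_right algebra_simps)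
    show "\<exists>K. \<forall>x y. norm (c x y) \<le> norm x * norm y * K"
    proof (intro exI allI)
      fix x y
      have t1: "\<bar>lam * inner (emb x) (emb y)\<bar> \<le> norm x * norm y * (\<bar>lam\<bar> * Ke * Ke)"
      proof -
        have "\<bar>inner (emb x) (emb y)\<bar> \<le> norm (emb x) * norm (emb y)" by (rule Cauchy_Schwarz_ineq2)
        also have "\<dots> \<le> (norm x * Ke) * (norm y * Ke)" using Ke by (intro mult_mono) auto
        finally have "\<bar>inner (emb x) (emb y)\<bar> \<le> norm x * norm y * (Ke * Ke)" by (simp add: algebra_simps)
        then have "\<bar>lam\<bar> * \<bar>inner (emb x) (emb y)\<bar> \<le> \<bar>lam\<bar> * (norm x * norm y * (Ke * Ke))"
          by (rule mult_left_mono) simp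
        then show ?thesis by (simp add: abs_mult algebra_simps)
      qed
      have t2: "\<bar>a x y\<bar> \<le> norm x * norm y * Ka" using Ka(1) by simp
      have t3: "\<bar>b w x y\<bar> \<le> norm x * norm y * (\<bar>C_B\<bar> * normV w * sK * sK)"
      proof -
        have "\<bar>b w x y\<bar> \<le> C_B * normV w * normV x * normV y" by (rule b_bound)
        also have "\<dots> \<le> \<bar>C_B\<bar> * normV w * normV x * normV y"
          using nV0 by (intro mult_right_mono) auto
        also have "\<dots> \<le> \<bar>C_B\<bar> * normV w * (sK * norm x) * (sK * norm y)"
          using nV0 nVb sK by (intro mult_mono) auto
        finally show ?thesis by (simp add: algebra_simps)
      qed
      show "norm (c x y) \<le> norm x * norm y * (\<bar>lam\<bar> * Ke * Ke + Ka + \<bar>C_B\<bar> * normV w * sK * sK)"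
        using t1 t2 t3 unfolding c_def real_norm_def by (simp add: algebra_simps)
    qed
  qed
  have coer: "c u u \<ge> (3/4 * \<alpha>) * (norm u)\<^sup>2" for u
  proof -
    define Q where "Q = C\<theta> (1/4) * normV w powr \<theta>1"
    have Y: "\<bar>b w u u\<bar> \<le> Q * (norm (emb u))\<^sup>2 + 1/4 * a u u"
      using Young(2)[of "1/4" w u] nV2[of u] by (simp add: Q_def)
    have l: "lam * (norm (emb u))\<^sup>2 \<ge> Q * (norm (emb u))\<^sup>2"
      using lam_ge unfolding Q_def by (intro mult_right_mono) auto
    have "c u u = lam * (norm (emb u))\<^sup>2 + a u u + b w u u"
      unfolding c_def by (simp add: power2_norm_eq_inner)
    also have "\<dots> \<ge> 3/4 * a u u" using Y l by linarith
    finally have "c u u \<ge> 3/4 * a u u" .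
    moreover have "3/4 * a u u \<ge> 3/4 * (\<alpha> * (norm u)\<^sup>2)" using a_coercive(2)[of u] by simp
    ultimately show ?thesis by simp
  qed
  define L where "L z = inner f (emb z)" for z
  have bL: "bounded_linear L" unfolding L_def
    by (rule bounded_linear_compose[OF bounded_linear_inner_right emb_lin])
  have "\<exists>u\<in>D. \<forall>v\<in>D. c u (v - u) - L (v - u) + r v - r u \<ge> 0"
  proof (rule stampacchia[OF Dconv Dne _ lsc low cb _ coer bL])
    show "r ((1-t) *\<^sub>R x + t *\<^sub>R y) \<le> (1-t)*r x + t*r y" if "x\<in>D" "y\<in>D" "0<t" "t<1" for x y t
      using convD[OF that] by simp
    show "0 < 3/4 * \<alpha>" using a_coercive(1) by simp
  qed
  then obtain u where uD: "u \<in> D" and uv: "\<And>v. v \<in> D \<Longrightarrow> c u (v - u) - L (v - u) + r v - r u \<ge> 0"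
    by blast
  have VI: "ereal (c u (v - u)) + \<phi> v \<ge> ereal (L (v - u)) + \<phi> u" for v
  proof (cases "v \<in> D")
    case True
    then show ?thesis using uv[OF True] fin[OF True] fin[OF uD] by simp
  next
    case False
    then show ?thesis using notD[OF False] fin[OF uD] by simp
  qed
  have sub: "(\<lambda>z. L z - c u z) \<in> subdiff \<phi> u"
    unfolding subdiff_def
  proof (intro CollectI conjI allI)
    show "bounded_linear (\<lambda>z. L z - c u z)"
      by (rule bounded_linear_sub[OF bL bounded_bilinear.bounded_linear_right[OF cb]])
    show "\<phi> u < \<infinity>" using uD by (simp add: D_def)
    fix v
    show "ereal (L (v - u) - c u (v - u)) + \<phi> u \<le> \<phi> v"
    proof (cases "v \<in> D")
      case True
      then show ?thesis using uv[OF True] fin[OF True] fin[OF uD] by simp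
    next
      case False
      then show ?thesis using notD[OF False] fin[OF uD] by simp
    qed
  qed
  show ?thesis
  proof (intro exI conjI allI)
    show "\<phi> u < \<infinity>" using uD by (simp add: D_def)
    show "u \<in> dom_subdiff \<phi>" unfolding dom_subdiff_def using sub by blast
    fix v
    show "ereal (lam * inner (emb u) (emb (v - u)) + a u (v - u) + b w u (v - u)) + \<phi> v
                 \<ge> ereal (inner f (emb (v - u))) + \<phi> u"
      using VI[of v] unfolding c_def L_def .
  qed
qed

end
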